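(* Let $r\ge3$ and $d\in\{1,\dots,r-1\}$. Then there is a brick $M\in\mathrm{rep}_{\mathrm{proj}}(K_r,d)$ which is not $(d+1)$-homogeneous.
   Context: $k$ algebraically closed of arbitrary characteristic. For $n\ge1$, $K_n$ is the Kronecker quiver with arrows $\gamma_1,\dots,\gamma_n:1\to2$, $A_n=\bigoplus_ik\gamma_i$. For $M=(M_1,M_2,(M(\gamma_i))_i)\in\mathrm{rep}(K_r)$ let $\psi_M:A_r\otimes M_1\to M_2$, $\gamma_i\otimes m\mapsto M(\gamma_i)(m)$; $M\in\mathrm{rep}_{\mathrm{proj}}(K_r,d)$ means $\psi_M|_{\mathfrak v\otimes M_1}$ is injective for every $d$-dimensional subspace $\mathfrak v\subseteq A_r$. For an injective linear map $\alpha:A_e\to A_r$, $\alpha^*(M)\in\mathrm{rep}(K_e)$ is $(M_1,M_2,(\psi_M(\alpha(\gamma_j)\otimes-))_{j\le e})$. $M$ is $e$-homogeneous ($1\le e\le r$) if $\alpha^*(M)\cong\beta^*(M)$ for all injective linear maps $\alpha,\beta:A_e\to A_r$. A brick is a representation with endomorphism ring $k$. *)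

theory Defs
  imports "Jordan_Normal_Form.Matrix" "HOL-Computational_Algebra.Polynomial"
begin

definition alg_closed :: "'k::field itself \<Rightarrow> bool" where
  "alg_closed _ \<longleftrightarrow> (\<forall>p :: 'k poly. degree p \<ge> 1 \<longrightarrow> (\<exists>x. poly p x = 0))"

text \<open>A finite-dimensional representation of a Kronecker quiver: M_1 = k^(dim1),
  M_2 = k^(dim2), and the arrow gamma_i acts by the matrix arr M i (dim2 x dim1).\<close>
record 'k krep =
  dim1 :: nat
  dim2 :: nat
  arr :: "nat \<Rightarrow> 'k mat"

definition is_rep :: "nat \<Rightarrow> 'k::field krep \<Rightarrow> bool" where
  "is_rep r M \<longleftrightarrow> (\<forall>i<r. arr M i \<in> carrier_mat (dim2 M) (dim1 M))"

text \<open>A linear map A_e -> A_r, given by its r x e matrix w.r.t. the bases gamma; injectivity.\<close>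
definition inj_lin :: "nat \<Rightarrow> nat \<Rightarrow> 'k::field mat \<Rightarrow> bool" where
  "inj_lin r e \<alpha> \<longleftrightarrow> \<alpha> \<in> carrier_mat r e \<and>
     (\<forall>v \<in> carrier_vec e. \<alpha> *\<^sub>v v = 0\<^sub>v r \<longrightarrow> v = 0\<^sub>v e)"

text \<open>Pullback alpha^*(M): arrow gamma_j acts by psi_M(alpha(gamma_j) tensor -)
  = sum_i alpha_(i,j) M(gamma_i).\<close>
definition pullback :: "nat \<Rightarrow> 'k::field mat \<Rightarrow> 'k krep \<Rightarrow> 'k krep" where
  "pullback r \<alpha> M = \<lparr> dim1 = dim1 M, dim2 = dim2 M,
     arr = (\<lambda>j. mat (dim2 M) (dim1 M)
                  (\<lambda>(p, q). \<Sum>i<r. \<alpha> $$ (i, j) * (arr M i $$ (p, q)))) \<rparr>"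

text \<open>psi_M : A_n tensor M_1 -> M_2, with A_n tensor M_1 identified with M_1^n via
  sum_i gamma_i tensor x_i <-> (x_i)_i.\<close>
definition psi :: "nat \<Rightarrow> 'k::field krep \<Rightarrow> (nat \<Rightarrow> 'k vec) \<Rightarrow> 'k vec" where
  "psi n M x = vec (dim2 M) (\<lambda>p. \<Sum>i<n. (arr M i *\<^sub>v x i) $ p)"

text \<open>M in rep_proj(K_r, d): for every d-dimensional subspace v = alpha(A_d) of A_r
  (alpha : A_d -> A_r injective), psi_M is injective on v tensor M_1. Via the isomorphism
  alpha tensor id : A_d tensor M_1 -> v tensor M_1, psi_M restricted to v tensor M_1 is
  psi of alpha^*(M) on A_d tensor M_1.\<close>
definition rep_proj :: "nat \<Rightarrow> nat \<Rightarrow> 'k::field krep \<Rightarrow> bool" where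
  "rep_proj r d M \<longleftrightarrow> (\<forall>\<alpha>. inj_lin r d \<alpha> \<longrightarrow>
     (\<forall>x. (\<forall>j<d. x j \<in> carrier_vec (dim1 M)) \<longrightarrow>
          psi d (pullback r \<alpha> M) x = 0\<^sub>v (dim2 M) \<longrightarrow> (\<forall>j<d. x j = 0\<^sub>v (dim1 M))))"

definition rep_hom :: "nat \<Rightarrow> 'k::field krep \<Rightarrow> 'k krep \<Rightarrow> 'k mat \<Rightarrow> 'k mat \<Rightarrow> bool" where
  "rep_hom n M N f1 f2 \<longleftrightarrow> f1 \<in> carrier_mat (dim1 N) (dim1 M) \<and>
     f2 \<in> carrier_mat (dim2 N) (dim2 M) \<and> (\<forall>i<n. f2 * arr M i = arr N i * f1)"

definition rep_iso :: "nat \<Rightarrow> 'k::field krep \<Rightarrow> 'k krep \<Rightarrow> bool" where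
  "rep_iso n M N \<longleftrightarrow> (\<exists>f1 f2. rep_hom n M N f1 f2 \<and> invertible_mat f1 \<and> invertible_mat f2)"

definition homogeneous :: "nat \<Rightarrow> nat \<Rightarrow> 'k::field krep \<Rightarrow> bool" where
  "homogeneous r e M \<longleftrightarrow> (\<forall>\<alpha> \<beta>. inj_lin r e \<alpha> \<longrightarrow> inj_lin r e \<beta> \<longrightarrow>
     rep_iso e (pullback r \<alpha> M) (pullback r \<beta> M))"

definition brick :: "nat \<Rightarrow> 'k::field krep \<Rightarrow> bool" where
  "brick n M \<longleftrightarrow> dim1 M + dim2 M > 0 \<and>
     (\<forall>f1 f2. rep_hom n M M f1 f2 \<longrightarrow>
        (\<exists>c. f1 = c \<cdot>\<^sub>m 1\<^sub>m (dim1 M) \<and> f2 = c \<cdot>\<^sub>m 1\<^sub>m (dim2 M)))"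

end

theory Submission
  imports Defs "Jordan_Normal_Form.Determinant"
begin

definition Amat :: "nat \<Rightarrow> nat \<Rightarrow> nat \<Rightarrow> 'k::field mat" where
 "Amat r d i = mat (r*(d+2)-2) (d+2) (\<lambda>(p,q). (if p+2 = i*(d+2)+q then 1 else 0) -
    (if i = 0 \<and> q < 2 \<and> (\<exists>t. 1 \<le> t \<and> t \<le> d \<and> p+2 = t*(d+2)+t+q) then 1 else 0))"

definition Mrep :: "nat \<Rightarrow> nat \<Rightarrow> 'k::field krep" where
 "Mrep r d = \<lparr>dim1 = d+2, dim2 = r*(d+2)-2, arr = Amat r d\<rparr>"

lemma divmod_eq:
  fixes n :: nat
  assumes "q < n" "q' < n"
  shows "(i*n+q = i'*n+q') \<longleftrightarrow> (i = i' \<and> q = q')"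
proof
  assume h: "i*n+q = i'*n+q'"
  have "(i*n+q) div n = i" using assms by simp
  moreover have "(i'*n+q') div n = i'" using assms by simp
  moreover have "(i*n+q) mod n = q" using assms by simp
  moreover have "(i'*n+q') mod n = q'" using assms by simp
  ultimately show "i = i' \<and> q = q'" using h by metis
qed auto

lemma mult_mat_vec_idx:
  assumes "A \<in> carrier_mat m n" "v \<in> carrier_vec n" "p < m"
  shows "(A *\<^sub>v v) $ p = (\<Sum>q<n. A $$ (p,q) * v $ q)"
proof -
  have dv: "dim_vec v = n" using assms(2) by auto
  have "(A *\<^sub>v v) $ p = row A p \<bullet> v" using assms by simp
  also have "... = (\<Sum>q \<in> {0..<n}. row A p $ q * v $ q)" unfolding scalar_prod_def dv ..
  also have "... = (\<Sum>q<n. A $$ (p,q) * v $ q)"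
    unfolding atLeast0LessThan using assms by (intro sum.cong refl) auto
  finally show ?thesis .
qed

lemma Amat_carrier: "Amat r d i \<in> carrier_mat (r*(d+2)-2) (d+2)"
  unfolding Amat_def by simp

lemma Amat_idx: "p < r*(d+2)-2 \<Longrightarrow> q < d+2 \<Longrightarrow> Amat r d i $$ (p,q) = (if p+2 = i*(d+2)+q then 1 else 0) -
    (if i = 0 \<and> q < 2 \<and> (\<exists>t. 1 \<le> t \<and> t \<le> d \<and> p+2 = t*(d+2)+t+q) then 1 else 0)"
  unfolding Amat_def by simp

lemma psi_coord:
  fixes w :: "nat \<Rightarrow> 'k::field vec"
  assumes r: "r \<ge> 1" and w: "\<forall>i<r. w i \<in> carrier_vec (d+2)"
    and i: "i < r" and q: "q < d+2" and ge: "i*(d+2)+q \<ge> 2"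
  shows "psi r (Mrep r d) w $ (i*(d+2)+q-2) = w i $ q
     - (if 1 \<le> i \<and> i \<le> d \<and> q = i then w 0 $ 0 else 0)
     - (if 1 \<le> i \<and> i \<le> d \<and> q = i+1 then w 0 $ 1 else 0)"
proof -
  define n where "n = d+2"
  define p where "p = i*n+q-2"
  have p2: "p + 2 = i*n+q" using ge unfolding p_def n_def by simp
  have "i*n+q < r*n"
  proof -
    have "i*n+q < i*n+n" using q n_def by simp
    also have "... = (i+1)*n" by simp
    also have "... \<le> r*n" using i by (intro mult_right_mono) auto
    finally show ?thesis .
  qed
  hence pm: "p < r*n-2" using p2 by simp
  have dw: "\<And>i'. i' < r \<Longrightarrow> dim_vec (w i') = n" using w n_def by auto
  have "psi r (Mrep r d) w $ p = (\<Sum>i'<r. (Amat r d i' *\<^sub>v w i') $ p)"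
    unfolding psi_def Mrep_def krep.simps using pm n_def by (subst index_vec) auto
  also have "... = (\<Sum>i'<r. \<Sum>q'<n. ((if p+2 = i'*n+q' then 1 else 0) -
    (if i' = 0 \<and> q' < 2 \<and> (\<exists>t. 1 \<le> t \<and> t \<le> d \<and> p+2 = t*n+t+q') then 1 else 0)) * w i' $ q')"
  proof (rule sum.cong[OF refl])
    fix i' assume "i' \<in> {..<r}"
    hence di: "dim_vec (w i') = n" using dw by auto
    have "(Amat r d i' *\<^sub>v w i') $ p = (\<Sum>q'<n. Amat r d i' $$ (p,q') * w i' $ q')"
    proof -
      have c1: "Amat r d i' \<in> carrier_mat (r*n-2) n" using Amat_carrier[of r d i'] unfolding n_def .
      have c2: "w i' \<in> carrier_vec n" using di unfolding carrier_vec_def by simp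
      show ?thesis by (rule mult_mat_vec_idx[OF c1 c2 pm])
    qed
    also have "... = (\<Sum>q'<n. ((if p+2 = i'*n+q' then 1 else 0) -
    (if i' = 0 \<and> q' < 2 \<and> (\<exists>t. 1 \<le> t \<and> t \<le> d \<and> p+2 = t*n+t+q') then 1 else 0)) * w i' $ q')"
    proof (rule sum.cong[OF refl])
      fix x assume "x \<in> {..<n}"
      hence "x < d+2" unfolding n_def by simp
      note ai = Amat_idx[OF pm[unfolded n_def] this, of i']
      show "Amat r d i' $$ (p, x) * w i' $ x = ((if p+2 = i'*n+x then 1 else 0) -
    (if i' = 0 \<and> x < 2 \<and> (\<exists>t. 1 \<le> t \<and> t \<le> d \<and> p+2 = t*n+t+x) then 1 else 0)) * w i' $ x"
        unfolding n_def by (subst ai) (rule refl)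
    qed
    finally show "(Amat r d i' *\<^sub>v w i') $ p = (\<Sum>q'<n. ((if p+2 = i'*n+q' then 1 else 0) -
    (if i' = 0 \<and> q' < 2 \<and> (\<exists>t. 1 \<le> t \<and> t \<le> d \<and> p+2 = t*n+t+q') then 1 else 0)) * w i' $ q')" .
  qed
  also have "... = (\<Sum>i'<r. \<Sum>q'<n. (if i' = i \<and> q' = q then w i' $ q' else 0))
     - (\<Sum>i'<r. \<Sum>q'<n. (if i' = 0 \<and> q' < 2 \<and> (\<exists>t. 1 \<le> t \<and> t \<le> d \<and> p+2 = t*n+t+q') then w i' $ q' else 0))"
    unfolding sum_subtractf[symmetric] p2 
  proof (rule sum.cong[OF refl], rule sum.cong[OF refl])
    fix i' q' assume "i' \<in> {..<r}" "q' \<in> {..<n}"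
    hence "q' < n" by simp
    have qn: "q < n" using q unfolding n_def .
    have e: "(i*n+q = i'*n+q') = (i' = i \<and> q' = q)" using divmod_eq[OF qn \<open>q' < n\<close>, of i i'] by auto
    show "((if i*n+q = i'*n+q' then 1 else 0) -
    (if i' = 0 \<and> q' < 2 \<and> (\<exists>t. 1 \<le> t \<and> t \<le> d \<and> i*n+q = t*n+t+q') then 1 else 0)) * w i' $ q' =
      (if i' = i \<and> q' = q then w i' $ q' else 0) - (if i' = 0 \<and> q' < 2 \<and> (\<exists>t. 1 \<le> t \<and> t \<le> d \<and> i*n+q = t*n+t+q') then w i' $ q' else 0)"
      unfolding e by (cases "i' = i \<and> q' = q"; cases "i' = 0 \<and> q' < 2 \<and> (\<exists>t. 1 \<le> t \<and> t \<le> d \<and> i*n+q = t*n+t+q')") (simp_all only: if_True if_False; simp)+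
  qed
  also have "(\<Sum>i'<r. \<Sum>q'<n. (if i' = i \<and> q' = q then w i' $ q' else 0)) = w i $ q"
  proof -
    have qn: "q < n" using q unfolding n_def .
    have "\<And>i'. (\<Sum>q'<n. (if i' = i \<and> q' = q then w i' $ q' else 0)) = (if i' = i then w i' $ q else 0)"
    proof -
      fix i'
      have "(\<Sum>q'<n. (if i' = i \<and> q' = q then w i' $ q' else 0)) = (\<Sum>q'<n. (if q' = q then (if i' = i then w i' $ q' else 0) else 0))"
        by (intro sum.cong) auto
      also have "... = (if i' = i then w i' $ q else 0)" using qn by (subst sum.delta) auto
      finally show "(\<Sum>q'<n. (if i' = i \<and> q' = q then w i' $ q' else 0)) = (if i' = i then w i' $ q else 0)" .
    qed
    hence "(\<Sum>i'<r. \<Sum>q'<n. (if i' = i \<and> q' = q then w i' $ q' else 0)) = (\<Sum>i'<r. (if i' = i then w i' $ q else 0))"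
      by simp
    also have "... = w i $ q" using i by (subst sum.delta) auto
    finally show ?thesis .
  qed
  also have "(\<Sum>i'<r. \<Sum>q'<n. (if i' = 0 \<and> q' < 2 \<and> (\<exists>t. 1 \<le> t \<and> t \<le> d \<and> p+2 = t*n+t+q') then w i' $ q' else 0))
     = (if 1 \<le> i \<and> i \<le> d \<and> q = i then w 0 $ 0 else 0) + (if 1 \<le> i \<and> i \<le> d \<and> q = i+1 then w 0 $ 1 else 0)"
  proof -
    let ?C = "\<lambda>q'. \<exists>t. 1 \<le> t \<and> t \<le> d \<and> p+2 = t*n+t+q'"
    have C: "?C q' = (1 \<le> i \<and> i \<le> d \<and> q = i+q')" if "q' < 2" for q'
    proof -
      have qn: "q < n" using q unfolding n_def .
      have "?C q' = (\<exists>t. 1 \<le> t \<and> t \<le> d \<and> i*n+q = t*n+(t+q'))" unfolding p2 by (simp add: add.assoc)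
      also have "... = (\<exists>t. 1 \<le> t \<and> t \<le> d \<and> i = t \<and> q = t+q')"
      proof (intro iffI; elim exE conjE)
        fix t assume "1 \<le> t" "t \<le> d" "i*n+q = t*n+(t+q')"
        moreover have "t + q' < n" using \<open>t \<le> d\<close> that unfolding n_def by simp
        ultimately show "\<exists>t. 1 \<le> t \<and> t \<le> d \<and> i = t \<and> q = t+q'" using divmod_eq[OF qn, of "t+q'" i t] by auto
      qed auto
      also have "... = (1 \<le> i \<and> i \<le> d \<and> q = i+q')" by auto
      finally show ?thesis .
    qed
    have "(\<Sum>i'<r. \<Sum>q'<n. (if i' = 0 \<and> q' < 2 \<and> ?C q' then w i' $ q' else 0))
       = (\<Sum>i'<r. if i' = 0 then (\<Sum>q'<n. (if q' < 2 \<and> ?C q' then w 0 $ q' else 0)) else 0)"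
      by (intro sum.cong) auto
    also have "... = (\<Sum>q'<n. (if q' < 2 \<and> ?C q' then w 0 $ q' else 0))"
      using r by (subst sum.delta) auto
    also have "... = (\<Sum>q'\<in>{0,1}. (if q' < 2 \<and> ?C q' then w 0 $ q' else 0))"
      unfolding n_def by (rule sum.mono_neutral_right) auto
    also have "... = (if ?C 0 then w 0 $ 0 else 0) + (if ?C 1 then w 0 $ 1 else 0)" by auto
    also have "... = (if 1 \<le> i \<and> i \<le> d \<and> q = i then w 0 $ 0 else 0) + (if 1 \<le> i \<and> i \<le> d \<and> q = i+1 then w 0 $ 1 else 0)"
      using C[of 0] C[of 1] by simp
    finally show ?thesis .
  qed
  finally show ?thesis unfolding p_def n_def by simp
qed

definition xv :: "nat \<Rightarrow> nat \<Rightarrow> 'k::field vec" where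
  "xv d t = (if t \<le> d then unit_vec (d+2) t else 0\<^sub>v (d+2))"
definition yv :: "nat \<Rightarrow> nat \<Rightarrow> 'k::field vec" where
  "yv d t = (if t \<le> d then unit_vec (d+2) (t+1) else 0\<^sub>v (d+2))"

lemma xv_carrier[simp]: "xv d t \<in> carrier_vec (d+2)" unfolding xv_def by auto
lemma yv_carrier[simp]: "yv d t \<in> carrier_vec (d+2)" unfolding yv_def by auto
lemma xv_carrier'[simp]: "xv d t \<in> carrier_vec (Suc (Suc d))" unfolding xv_def by auto
lemma yv_carrier'[simp]: "yv d t \<in> carrier_vec (Suc (Suc d))" unfolding yv_def by auto
lemma dim_xv[simp]: "dim_vec (xv d t) = d+2" unfolding xv_def by auto
lemma dim_yv[simp]: "dim_vec (yv d t) = d+2" unfolding yv_def by auto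
lemma xv_idx: "q < d+2 \<Longrightarrow> xv d t $ q = (if t \<le> d \<and> q = t then 1 else 0)"
  unfolding xv_def by auto
lemma yv_idx: "q < d+2 \<Longrightarrow> yv d t $ q = (if t \<le> d \<and> q = t+1 then 1 else 0)"
  unfolding yv_def by auto

lemma dim_psi[simp]: "dim_vec (psi n M w) = dim2 M" unfolding psi_def by simp

lemma dim2_Mrep[simp]: "dim2 (Mrep r d) = r*(d+2)-2" and dim1_Mrep[simp]: "dim1 (Mrep r d) = d+2"
  and arr_Mrep[simp]: "arr (Mrep r d) = Amat r d"
  unfolding Mrep_def by simp_all

lemma ker_imp:
  fixes w :: "nat \<Rightarrow> 'k::field vec"
  assumes r: "r \<ge> 1" and w: "\<forall>i<r. w i \<in> carrier_vec (d+2)"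
    and z: "psi r (Mrep r d) w = 0\<^sub>v (r*(d+2)-2)" and i: "i < r"
  shows "w i = w 0 $ 0 \<cdot>\<^sub>v xv d i + w 0 $ 1 \<cdot>\<^sub>v yv d i"
proof (rule eq_vecI)
  show "dim_vec (w i) = dim_vec (w 0 $ 0 \<cdot>\<^sub>v xv d i + w 0 $ 1 \<cdot>\<^sub>v yv d i)" using w i by auto
  fix q assume "q < dim_vec (w 0 $ 0 \<cdot>\<^sub>v xv d i + w 0 $ 1 \<cdot>\<^sub>v yv d i)"
  hence q: "q < d+2" by simp
  have rhs: "(w 0 $ 0 \<cdot>\<^sub>v xv d i + w 0 $ 1 \<cdot>\<^sub>v yv d i) $ q
     = w 0 $ 0 * (if i \<le> d \<and> q = i then 1 else 0) + w 0 $ 1 * (if i \<le> d \<and> q = i+1 then 1 else 0)"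
    using q by (simp add: xv_idx yv_idx)
  show "w i $ q = (w 0 $ 0 \<cdot>\<^sub>v xv d i + w 0 $ 1 \<cdot>\<^sub>v yv d i) $ q"
  proof (cases "i*(d+2)+q \<ge> 2")
    case True
    have lt: "i*(d+2)+q < r*(d+2)"
    proof -
      have "i*(d+2)+q < i*(d+2)+(d+2)" using q by simp
      also have "... = (i+1)*(d+2)" by simp
      also have "... \<le> r*(d+2)" using i by (intro mult_right_mono) auto
      finally show ?thesis .
    qed
    have "psi r (Mrep r d) w $ (i*(d+2)+q-2) = 0" using z lt True by simp
    with psi_coord[OF r w i q True] rhs show ?thesis
      by (cases "i = 0") auto
  next
    case False
    hence "i = 0" "q < 2" by (auto simp: not_le)
    thus ?thesis using rhs by (cases q) auto
  qed
qed

lemma ker_if: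
  fixes a b :: "'k::field"
  assumes r: "r \<ge> 1" and w: "\<forall>i<r. w i = a \<cdot>\<^sub>v xv d i + b \<cdot>\<^sub>v yv d i"
  shows "psi r (Mrep r d) w = 0\<^sub>v (r*(d+2)-2)"
proof (rule eq_vecI)
  show "dim_vec (psi r (Mrep r d) w) = dim_vec (0\<^sub>v (r*(d+2)-2) :: 'k vec)" by simp
  fix p assume "p < dim_vec (0\<^sub>v (r*(d+2)-2) :: 'k vec)"
  hence p: "p+2 < r*(d+2)" by simp
  define i where "i = (p+2) div (d+2)"
  define q where "q = (p+2) mod (d+2)"
  have pe: "p+2 = i*(d+2)+q" unfolding i_def q_def by (metis div_mult_mod_eq)
  have q: "q < d+2" unfolding q_def by simp
  have i: "i < r" using p unfolding i_def by (simp add: less_mult_imp_div_less)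
  have wc: "\<forall>i<r. w i \<in> carrier_vec (d+2)" using w by (metis add_carrier_vec smult_carrier_vec xv_carrier yv_carrier)
  have w00: "w 0 $ 0 = a" and w01: "w 0 $ 1 = b" using w r by (auto simp: xv_idx yv_idx)
  have ge: "i*(d+2)+q \<ge> 2" using pe by simp
  have pp: "p = i*(d+2)+q-2" using pe by simp
  have wiq: "w i $ q = a * (if i \<le> d \<and> q = i then 1 else 0) + b * (if i \<le> d \<and> q = i+1 then 1 else 0)"
    using w i q by (simp add: xv_idx yv_idx)
  show "psi r (Mrep r d) w $ p = 0\<^sub>v (r*(d+2)-2) $ p"
    unfolding pp psi_coord[OF r wc i q ge] wiq w00 w01 using p pe ge
    by (cases "i = 0") auto
qed

lemma psi_idx:
  assumes "\<forall>j<e. arr N j \<in> carrier_mat (dim2 N) (dim1 N)" "\<forall>j<e. v j \<in> carrier_vec (dim1 N)"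
    "p < dim2 N"
  shows "psi e N v $ p = (\<Sum>j<e. \<Sum>q<dim1 N. arr N j $$ (p,q) * v j $ q)"
  unfolding psi_def using assms(3) apply simp
  by (intro sum.cong refl mult_mat_vec_idx) (use assms in auto)

lemma pullback_simps[simp]: "dim1 (pullback r \<alpha> M) = dim1 M" "dim2 (pullback r \<alpha> M) = dim2 M"
  "arr (pullback r \<alpha> M) j = mat (dim2 M) (dim1 M) (\<lambda>(p, q). \<Sum>i<r. \<alpha> $$ (i, j) * (arr M i $$ (p, q)))"
  unfolding pullback_def by simp_all

lemma pullback_idx: "p < dim2 M \<Longrightarrow> q < dim1 M \<Longrightarrow>
  arr (pullback r \<alpha> M) j $$ (p,q) = (\<Sum>i<r. \<alpha> $$ (i, j) * (arr M i $$ (p, q)))"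
  by simp

lemma pullback_psi:
  fixes M :: "'k::field krep"
  assumes rep: "is_rep r M" and v: "\<forall>j<e. v j \<in> carrier_vec (dim1 M)"
  shows "psi e (pullback r \<alpha> M) v = psi r M (\<lambda>i. vec (dim1 M) (\<lambda>q. \<Sum>j<e. \<alpha> $$ (i,j) * v j $ q))"
proof (rule eq_vecI)
  show "dim_vec (psi e (pullback r \<alpha> M) v) = dim_vec (psi r M (\<lambda>i. vec (dim1 M) (\<lambda>q. \<Sum>j<e. \<alpha> $$ (i,j) * v j $ q)))"
    by (simp add: pullback_def)
  fix p assume "p < dim_vec (psi r M (\<lambda>i. vec (dim1 M) (\<lambda>q. \<Sum>j<e. \<alpha> $$ (i,j) * v j $ q)))"
  hence p: "p < dim2 M" by simp
  have A: "\<forall>i<r. arr M i \<in> carrier_mat (dim2 M) (dim1 M)" using rep unfolding is_rep_def by auto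
  have "psi e (pullback r \<alpha> M) v $ p = (\<Sum>j<e. \<Sum>q<dim1 (pullback r \<alpha> M). arr (pullback r \<alpha> M) j $$ (p,q) * v j $ q)"
    by (rule psi_idx) (use v p in auto)
  also have "... = (\<Sum>j<e. \<Sum>q<dim1 M. (\<Sum>i<r. \<alpha> $$ (i, j) * (arr M i $$ (p, q))) * v j $ q)"
    using p by (intro sum.cong) (auto simp del: pullback_simps(3) simp add: pullback_idx)
  also have "... = (\<Sum>j<e. \<Sum>q<dim1 M. \<Sum>i<r. arr M i $$ (p,q) * (\<alpha> $$ (i,j) * v j $ q))"
    by (simp add: sum_distrib_right sum_distrib_left mult_ac)
  also have "... = (\<Sum>j<e. \<Sum>i<r. \<Sum>q<dim1 M. arr M i $$ (p,q) * (\<alpha> $$ (i,j) * v j $ q))"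
    by (intro sum.cong refl sum.swap)
  also have "... = (\<Sum>i<r. \<Sum>j<e. \<Sum>q<dim1 M. arr M i $$ (p,q) * (\<alpha> $$ (i,j) * v j $ q))"
    by (rule sum.swap)
  also have "... = (\<Sum>i<r. \<Sum>q<dim1 M. \<Sum>j<e. arr M i $$ (p,q) * (\<alpha> $$ (i,j) * v j $ q))"
    by (intro sum.cong refl sum.swap)
  also have "... = (\<Sum>i<r. \<Sum>q<dim1 M. arr M i $$ (p,q) * (vec (dim1 M) (\<lambda>q. \<Sum>j<e. \<alpha> $$ (i,j) * v j $ q)) $ q)"
    by (intro sum.cong refl) (simp add: sum_distrib_left)
  also have "... = psi r M (\<lambda>i. vec (dim1 M) (\<lambda>q. \<Sum>j<e. \<alpha> $$ (i,j) * v j $ q)) $ p"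
    by (rule psi_idx[symmetric]) (use A p in auto)
  finally show "psi e (pullback r \<alpha> M) v $ p = psi r M (\<lambda>i. vec (dim1 M) (\<lambda>q. \<Sum>j<e. \<alpha> $$ (i,j) * v j $ q)) $ p" .
qed

lemma hom_psi:
  fixes N N' :: "'k::field krep"
  assumes h: "rep_hom e N N' f1 f2"
    and AN: "\<forall>j<e. arr N j \<in> carrier_mat (dim2 N) (dim1 N)"
    and AN': "\<forall>j<e. arr N' j \<in> carrier_mat (dim2 N') (dim1 N')"
    and v: "\<forall>j<e. v j \<in> carrier_vec (dim1 N)"
  shows "f2 *\<^sub>v psi e N v = psi e N' (\<lambda>j. f1 *\<^sub>v v j)"
proof -
  have f1: "f1 \<in> carrier_mat (dim1 N') (dim1 N)" and f2: "f2 \<in> carrier_mat (dim2 N') (dim2 N)"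
    and c: "\<forall>i<e. f2 * arr N i = arr N' i * f1" using h unfolding rep_hom_def by auto
  have pc: "psi e N v \<in> carrier_vec (dim2 N)" unfolding psi_def by simp
  show ?thesis
  proof (rule eq_vecI)
    show "dim_vec (f2 *\<^sub>v psi e N v) = dim_vec (psi e N' (\<lambda>j. f1 *\<^sub>v v j))" using f2 by simp
    fix p' assume "p' < dim_vec (psi e N' (\<lambda>j. f1 *\<^sub>v v j))"
    hence p': "p' < dim2 N'" by simp
    have "(f2 *\<^sub>v psi e N v) $ p' = (\<Sum>p<dim2 N. f2 $$ (p',p) * psi e N v $ p)"
      by (rule mult_mat_vec_idx[OF f2 pc p'])
    also have "... = (\<Sum>p<dim2 N. f2 $$ (p',p) * (\<Sum>j<e. (arr N j *\<^sub>v v j) $ p))"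
      by (intro sum.cong refl) (simp add: psi_def)
    also have "... = (\<Sum>j<e. \<Sum>p<dim2 N. f2 $$ (p',p) * (arr N j *\<^sub>v v j) $ p)"
      by (simp add: sum_distrib_left sum.swap[of _ "{..<e}"])
    also have "... = (\<Sum>j<e. (f2 *\<^sub>v (arr N j *\<^sub>v v j)) $ p')"
    proof (intro sum.cong refl)
      fix j assume "j \<in> {..<e}"
      hence "arr N j *\<^sub>v v j \<in> carrier_vec (dim2 N)" using AN v by auto
      thus "(\<Sum>p<dim2 N. f2 $$ (p',p) * (arr N j *\<^sub>v v j) $ p) = (f2 *\<^sub>v (arr N j *\<^sub>v v j)) $ p'"
        by (rule mult_mat_vec_idx[OF f2 _ p', symmetric])
    qed
    also have "... = (\<Sum>j<e. (arr N' j *\<^sub>v (f1 *\<^sub>v v j)) $ p')"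
    proof (intro sum.cong refl)
      fix j assume "j \<in> {..<e}"
      hence j: "j < e" by simp
      have "f2 *\<^sub>v (arr N j *\<^sub>v v j) = (f2 * arr N j) *\<^sub>v v j"
        using AN v f2 j by (metis assoc_mult_mat_vec)
      also have "... = (arr N' j * f1) *\<^sub>v v j" using c j by simp
      also have "... = arr N' j *\<^sub>v (f1 *\<^sub>v v j)"
        using AN' v f1 j by (metis assoc_mult_mat_vec)
      finally show "(f2 *\<^sub>v (arr N j *\<^sub>v v j)) $ p' = (arr N' j *\<^sub>v (f1 *\<^sub>v v j)) $ p'" by simp
    qed
    also have "... = psi e N' (\<lambda>j. f1 *\<^sub>v v j) $ p'" using p' by (simp add: psi_def)
    finally show "(f2 *\<^sub>v psi e N v) $ p' = psi e N' (\<lambda>j. f1 *\<^sub>v v j) $ p'" .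
  qed
qed

lemma mat_unit_idx:
  fixes A :: "'k::field mat"
  assumes "A \<in> carrier_mat m n" "q < n" "p < m"
  shows "(A *\<^sub>v unit_vec n q) $ p = A $$ (p,q)"
proof -
  have "(A *\<^sub>v unit_vec n q) $ p = (\<Sum>q'<n. A $$ (p,q') * unit_vec n q $ q')"
    by (rule mult_mat_vec_idx[OF assms(1) _ assms(3)]) simp
  also have "... = (\<Sum>q'<n. if q' = q then A $$ (p,q') else 0)"
    by (intro sum.cong refl) (auto simp: unit_vec_def)
  also have "... = A $$ (p,q)" using assms(2) by (subst sum.delta) auto
  finally show ?thesis .
qed

lemma mat_from_units:
  fixes f :: "'k::field mat"
  assumes f: "f \<in> carrier_mat n n" and u: "\<forall>t<n. f *\<^sub>v unit_vec n t = a \<cdot>\<^sub>v unit_vec n t"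
  shows "f = a \<cdot>\<^sub>m 1\<^sub>m n"
proof (rule eq_matI)
  show "dim_row f = dim_row (a \<cdot>\<^sub>m 1\<^sub>m n)" "dim_col f = dim_col (a \<cdot>\<^sub>m 1\<^sub>m n)" using f by auto
  fix p t assume "p < dim_row (a \<cdot>\<^sub>m 1\<^sub>m n)" "t < dim_col (a \<cdot>\<^sub>m 1\<^sub>m n)"
  hence p: "p < n" and t: "t < n" by auto
  have "f $$ (p,t) = (f *\<^sub>v unit_vec n t) $ p" using mat_unit_idx[OF f t p] by simp
  also have "... = (a \<cdot>\<^sub>v unit_vec n t) $ p" using u t by simp
  finally show "f $$ (p,t) = (a \<cdot>\<^sub>m 1\<^sub>m n) $$ (p,t)" using p t by simp
qed

lemma invertible_ker:
  fixes f :: "'k::field mat"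
  assumes inv: "invertible_mat f" and f: "f \<in> carrier_mat n n" and v: "v \<in> carrier_vec n"
    and z: "f *\<^sub>v v = 0\<^sub>v n"
  shows "v = 0\<^sub>v n"
proof -
  obtain B where fB: "f * B = 1\<^sub>m (dim_row f)" and Bf: "B * f = 1\<^sub>m (dim_row B)"
    using inv unfolding invertible_mat_def inverts_mat_def by auto
  have "dim_col B = n" using fB f by (metis index_mult_mat(3) index_one_mat(3) carrier_matD(1))
  moreover have "dim_row B = n" using Bf f by (metis index_mult_mat(3) index_one_mat(3) carrier_matD(2))
  ultimately have B: "B \<in> carrier_mat n n" by auto
  have "v = 1\<^sub>m n *\<^sub>v v" using v by simp
  also have "... = (B * f) *\<^sub>v v" using Bf B by simp
  also have "... = B *\<^sub>v (f *\<^sub>v v)" using B f v by (metis assoc_mult_mat_vec)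
  also have "... = 0\<^sub>v n" using z B by auto
  finally show ?thesis .
qed

lemma Amat_unit:
  assumes i: "i < r" and q: "q < d+2" and ge: "i*(d+2)+q \<ge> 2"
  shows "Amat r d i *\<^sub>v unit_vec (d+2) q = unit_vec (r*(d+2)-2) (i*(d+2)+q-2)"
proof (rule eq_vecI)
  show "dim_vec (Amat r d i *\<^sub>v unit_vec (d+2) q) = dim_vec (unit_vec (r*(d+2)-2) (i*(d+2)+q-2) :: 'a vec)"
    by (simp add: Amat_def)
  fix p assume "p < dim_vec (unit_vec (r*(d+2)-2) (i*(d+2)+q-2) :: 'a vec)"
  hence p: "p < r*(d+2)-2" by simp
  have "(Amat r d i *\<^sub>v unit_vec (d+2) q) $ p = Amat r d i $$ (p,q)"
    by (rule mat_unit_idx[OF Amat_carrier q p])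
  also have "... = (if p+2 = i*(d+2)+q then 1 else 0)"
  proof -
    have h: "\<not> (i = 0 \<and> q < 2 \<and> (\<exists>t. 1 \<le> t \<and> t \<le> d \<and> p+2 = t*(d+2)+t+q))" using ge by auto
    have "Amat r d i $$ (p,q) = (if p+2 = i*(d+2)+q then 1 else 0) - 0"
      using Amat_idx[OF p q, of i] h by (simp only: if_False)
    thus ?thesis by simp
  qed
  also have "... = unit_vec (r*(d+2)-2) (i*(d+2)+q-2) $ p" using p ge by (auto simp: unit_vec_def)
  finally show "(Amat r d i *\<^sub>v unit_vec (d+2) q) $ p = unit_vec (r*(d+2)-2) (i*(d+2)+q-2) $ p" .
qed

lemma ker_x: "r \<ge> 1 \<Longrightarrow> psi r (Mrep r d) (xv d) = (0\<^sub>v (r*(d+2)-2) :: 'k::field vec)"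
  by (rule ker_if[of r "xv d" 1 d 0]) (auto intro!: eq_vecI)

lemma ker_y: "r \<ge> 1 \<Longrightarrow> psi r (Mrep r d) (yv d) = (0\<^sub>v (r*(d+2)-2) :: 'k::field vec)"
  by (rule ker_if[of r "yv d" 0 d 1]) (auto intro!: eq_vecI)

lemma Mrep_arr_carrier: "\<forall>j<e. arr (Mrep r d) j \<in> carrier_mat (dim2 (Mrep r d)) (dim1 (Mrep r d))"
  using Amat_carrier[of r d] by (simp only: dim2_Mrep dim1_Mrep arr_Mrep) blast

lemma is_rep_M: "is_rep r (Mrep r d)"
  unfolding is_rep_def using Mrep_arr_carrier by blast

lemma transfer_ker:
  fixes f1 f2 :: "'k::field mat"
  assumes r: "r \<ge> 1" and h: "rep_hom r (Mrep r d) (Mrep r d) f1 f2"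
    and w: "\<forall>i<r. w i \<in> carrier_vec (d+2)" and z: "psi r (Mrep r d) w = 0\<^sub>v (r*(d+2)-2)"
    and i: "i < r"
  shows "f1 *\<^sub>v w i = (f1 *\<^sub>v w 0) $ 0 \<cdot>\<^sub>v xv d i + (f1 *\<^sub>v w 0) $ 1 \<cdot>\<^sub>v yv d i"
proof -
  have f1: "f1 \<in> carrier_mat (d+2) (d+2)" and f2: "f2 \<in> carrier_mat (r*(d+2)-2) (r*(d+2)-2)"
    using h unfolding rep_hom_def by auto
  have "f2 *\<^sub>v psi r (Mrep r d) w = psi r (Mrep r d) (\<lambda>j. f1 *\<^sub>v w j)"
    by (rule hom_psi[OF h Mrep_arr_carrier Mrep_arr_carrier]) (use w in simp)
  moreover have "f2 *\<^sub>v 0\<^sub>v (r*(d+2)-2) = 0\<^sub>v (r*(d+2)-2)" using f2 by auto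
  ultimately have z': "psi r (Mrep r d) (\<lambda>j. f1 *\<^sub>v w j) = 0\<^sub>v (r*(d+2)-2)" using z by simp
  have fw: "\<forall>i<r. f1 *\<^sub>v w i \<in> carrier_vec (d+2)" using f1 w by auto
  show ?thesis by (rule ker_imp[OF r fw z' i])
qed

lemma brick_M:
  assumes r: "r \<ge> 2" and d: "d \<ge> 1" and dr: "d < r"
  shows "brick r (Mrep r d :: 'k::field krep)"
  unfolding brick_def
proof (intro conjI allI impI)
  show "0 < dim1 (Mrep r d :: 'k krep) + dim2 (Mrep r d :: 'k krep)" by simp
  fix f1 f2 :: "'k mat" assume h: "rep_hom r (Mrep r d) (Mrep r d) f1 f2"
  have f1: "f1 \<in> carrier_mat (d+2) (d+2)" and f2: "f2 \<in> carrier_mat (r*(d+2)-2) (r*(d+2)-2)"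
    and c: "\<forall>i<r. f2 * Amat r d i = Amat r d i * f1"
    using h unfolding rep_hom_def by auto
  have r1: "r \<ge> 1" using r by simp
  define a where "a = (f1 *\<^sub>v xv d 0) $ 0"
  define b where "b = (f1 *\<^sub>v xv d 0) $ 1"
  define c0 where "c0 = (f1 *\<^sub>v yv d 0) $ 0"
  define c1 where "c1 = (f1 *\<^sub>v yv d 0) $ 1"
  have X: "\<And>i. i < r \<Longrightarrow> f1 *\<^sub>v xv d i = a \<cdot>\<^sub>v xv d i + b \<cdot>\<^sub>v yv d i"
    unfolding a_def b_def by (rule transfer_ker[OF r1 h _ ker_x[OF r1]]) auto
  have Y: "\<And>i. i < r \<Longrightarrow> f1 *\<^sub>v yv d i = c0 \<cdot>\<^sub>v xv d i + c1 \<cdot>\<^sub>v yv d i"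
    unfolding c0_def c1_def by (rule transfer_ker[OF r1 h _ ker_y[OF r1]]) auto
  have e1: "a \<cdot>\<^sub>v xv d 1 + b \<cdot>\<^sub>v yv d 1 = c0 \<cdot>\<^sub>v xv d 0 + c1 \<cdot>\<^sub>v yv d 0"
    using X[of 1] Y[of 0] r d by (simp add: xv_def yv_def)
  have "(a \<cdot>\<^sub>v xv d 1 + b \<cdot>\<^sub>v yv d 1) $ 2 = (c0 \<cdot>\<^sub>v xv d 0 + c1 \<cdot>\<^sub>v yv d 0) $ 2" using e1 by simp
  hence b0: "b = 0" using d by (simp add: xv_idx yv_idx)
  have "(a \<cdot>\<^sub>v xv d 1 + b \<cdot>\<^sub>v yv d 1) $ 0 = (c0 \<cdot>\<^sub>v xv d 0 + c1 \<cdot>\<^sub>v yv d 0) $ 0" using e1 by simp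
  hence c00: "c0 = 0" using d by (simp add: xv_idx yv_idx)
  have "(a \<cdot>\<^sub>v xv d 1 + b \<cdot>\<^sub>v yv d 1) $ 1 = (c0 \<cdot>\<^sub>v xv d 0 + c1 \<cdot>\<^sub>v yv d 0) $ 1" using e1 by simp
  hence c1a: "c1 = a" using d by (simp add: xv_idx yv_idx)
  have U: "\<forall>t<d+2. f1 *\<^sub>v unit_vec (d+2) t = a \<cdot>\<^sub>v unit_vec (d+2) t"
  proof (intro allI impI)
    fix t assume t: "t < d+2"
    show "f1 *\<^sub>v unit_vec (d+2) t = a \<cdot>\<^sub>v unit_vec (d+2) t"
    proof (cases "t \<le> d")
      case True
      hence "t < r" using dr by simp
      from X[OF this] True b0 show ?thesis by (auto simp: xv_def yv_def intro!: eq_vecI)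
    next
      case False
      hence t1: "t = d+1" using t by simp
      have "d < r" using dr .
      from Y[OF this] t1 c00 c1a show ?thesis by (auto simp: xv_def yv_def intro!: eq_vecI)
    qed
  qed
  have F1: "f1 = a \<cdot>\<^sub>m 1\<^sub>m (dim1 (Mrep r d))" using mat_from_units[OF f1 U] by simp
  have "\<forall>p<r*(d+2)-2. f2 *\<^sub>v unit_vec (r*(d+2)-2) p = a \<cdot>\<^sub>v unit_vec (r*(d+2)-2) p"
  proof (intro allI impI)
    fix p assume p: "p < r*(d+2)-2"
    define i where "i = (p+2) div (d+2)"
    define q where "q = (p+2) mod (d+2)"
    have pe: "p+2 = i*(d+2)+q" unfolding i_def q_def by (metis div_mult_mod_eq)
    have q: "q < d+2" unfolding q_def by simp
    have i: "i < r" using p unfolding i_def by (simp add: less_mult_imp_div_less)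
    have ge: "i*(d+2)+q \<ge> 2" using pe by simp
    have pp: "i*(d+2)+q-2 = p" using pe by simp
    have Au: "Amat r d i *\<^sub>v unit_vec (d+2) q = unit_vec (r*(d+2)-2) p"
      using Amat_unit[OF i q ge] unfolding pp .
    have "f2 *\<^sub>v unit_vec (r*(d+2)-2) p = f2 *\<^sub>v (Amat r d i *\<^sub>v unit_vec (d+2) q)" by (simp only: Au)
    also have "... = (f2 * Amat r d i) *\<^sub>v unit_vec (d+2) q"
      using f2 Amat_carrier[of r d i] by (metis assoc_mult_mat_vec unit_vec_carrier)
    also have "... = (Amat r d i * f1) *\<^sub>v unit_vec (d+2) q" using c i by simp
    also have "... = Amat r d i *\<^sub>v (f1 *\<^sub>v unit_vec (d+2) q)"
      using f1 Amat_carrier[of r d i] by (metis assoc_mult_mat_vec unit_vec_carrier)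
    also have "... = Amat r d i *\<^sub>v (a \<cdot>\<^sub>v unit_vec (d+2) q)" using U q by simp
    also have "... = a \<cdot>\<^sub>v (Amat r d i *\<^sub>v unit_vec (d+2) q)"
      by (rule mult_mat_vec[OF Amat_carrier unit_vec_carrier])
    also have "... = a \<cdot>\<^sub>v unit_vec (r*(d+2)-2) p" by (simp only: Au)
    finally show "f2 *\<^sub>v unit_vec (r*(d+2)-2) p = a \<cdot>\<^sub>v unit_vec (r*(d+2)-2) p" .
  qed
  hence "f2 = a \<cdot>\<^sub>m 1\<^sub>m (dim2 (Mrep r d))" using mat_from_units[OF f2] by simp
  with F1 show "\<exists>c. f1 = c \<cdot>\<^sub>m 1\<^sub>m (dim1 (Mrep r d)) \<and> f2 = c \<cdot>\<^sub>m 1\<^sub>m (dim2 (Mrep r d))" by blast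
qed

lemma det_zero_last_row:
  fixes Q :: "'k::field mat"
  assumes Q: "Q \<in> carrier_mat (Suc d) (Suc d)" and z: "\<forall>q<Suc d. Q $$ (d,q) = 0"
  shows "det Q = 0"
proof -
  have "\<And>p. p permutes {0..<Suc d} \<Longrightarrow> (\<Prod>i = 0..<Suc d. Q $$ (i, p i)) = 0"
  proof -
    fix p assume p: "p permutes {0..<Suc d}"
    have "p d \<in> {0..<Suc d}" using p by (simp add: permutes_in_image)
    hence "Q $$ (d, p d) = 0" using z by auto
    thus "(\<Prod>i = 0..<Suc d. Q $$ (i, p i)) = 0" by (intro prod_zero) auto
  qed
  thus ?thesis unfolding det_def'[OF Q]
    by (intro sum.neutral ballI) (metis (mono_tags) mem_Collect_eq mult_zero_right)
qed

lemma proj_M: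
  assumes r: "r \<ge> 1" and d: "d \<ge> 1" and dr: "d < r"
  shows "rep_proj r d (Mrep r d :: 'k::field krep)"
  unfolding rep_proj_def
proof (rule allI, rule impI, rule allI, rule impI, rule impI)
  fix \<alpha> :: "'k mat" and x :: "nat \<Rightarrow> 'k vec"
  assume inj: "inj_lin r d \<alpha>" and xc: "\<forall>j<d. x j \<in> carrier_vec (dim1 (Mrep r d :: 'k krep))"
    and z: "psi d (pullback r \<alpha> (Mrep r d)) x = 0\<^sub>v (dim2 (Mrep r d :: 'k krep))"
  have \<alpha>: "\<alpha> \<in> carrier_mat r d" using inj unfolding inj_lin_def by auto
  define w where "w = (\<lambda>i. vec (d+2) (\<lambda>q. \<Sum>j<d. \<alpha> $$ (i,j) * x j $ q) :: 'k vec)"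
  have "psi d (pullback r \<alpha> (Mrep r d)) x = psi r (Mrep r d) w"
    unfolding w_def using pullback_psi[OF is_rep_M xc] by simp
  hence zw: "psi r (Mrep r d) w = 0\<^sub>v (r*(d+2)-2)" using z by simp
  have wc: "\<forall>i<r. w i \<in> carrier_vec (d+2)" unfolding w_def by simp
  define a where "a = w 0 $ 0"
  define b where "b = w 0 $ 1"
  have W: "(\<Sum>j<d. \<alpha> $$ (i,j) * x j $ q) = a * (if i \<le> d \<and> q = i then 1 else 0) + b * (if i \<le> d \<and> q = i+1 then 1 else 0)"
    if i: "i < r" and q: "q < d+2" for i q
  proof -
    have "w i = a \<cdot>\<^sub>v xv d i + b \<cdot>\<^sub>v yv d i" unfolding a_def b_def by (rule ker_imp[OF r wc zw i])
    hence "w i $ q = (a \<cdot>\<^sub>v xv d i + b \<cdot>\<^sub>v yv d i) $ q" by simp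
    thus ?thesis using q unfolding w_def by (simp add: xv_idx yv_idx)
  qed
  have ab: "a = 0 \<and> b = 0"
  proof (rule ccontr)
    assume nab: "\<not> (a = 0 \<and> b = 0)"
    define s :: nat where "s = (if a \<noteq> 0 then 0 else 1)"
    define c where "c = (if a \<noteq> 0 then a else b)"
    have c0: "c \<noteq> 0" using nab unfolding c_def by auto
    define P where "P = mat (Suc d) (Suc d) (\<lambda>(i,j). if j < d then \<alpha> $$ (i,j) else 0)"
    define Q where "Q = mat (Suc d) (Suc d) (\<lambda>(j,q). if j < d then x j $ (q+s) else 0)"
    define D where "D = mat (Suc d) (Suc d) (\<lambda>(i,q). \<Sum>j<d. \<alpha> $$ (i,j) * x j $ (q+s))"
    have PQ: "P * Q = D"
    proof (rule eq_matI)
      fix i q assume "i < dim_row D" "q < dim_col D"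
      hence i: "i < Suc d" and q: "q < Suc d" unfolding D_def by auto
      have "(P * Q) $$ (i,q) = (\<Sum>j \<in> {0..<Suc d}. P $$ (i,j) * Q $$ (j,q))"
        using i q unfolding P_def Q_def by (simp add: scalar_prod_def)
      also have "... = (\<Sum>j<Suc d. (if j < d then \<alpha> $$ (i,j) * x j $ (q+s) else 0))"
        unfolding atLeast0LessThan using i q by (intro sum.cong refl) (simp add: P_def Q_def)
      also have "... = (\<Sum>j<d. \<alpha> $$ (i,j) * x j $ (q+s))"
        by (simp only: sum.lessThan_Suc) simp
      also have "... = D $$ (i,q)" using i q unfolding D_def by simp
      finally show "(P * Q) $$ (i,q) = D $$ (i,q)" .
    qed (auto simp: P_def Q_def D_def)
    have P: "P \<in> carrier_mat (Suc d) (Suc d)" and Q: "Q \<in> carrier_mat (Suc d) (Suc d)"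
      unfolding P_def Q_def by auto
    have "det Q = 0" by (rule det_zero_last_row[OF Q]) (simp add: Q_def)
    hence dD0: "det D = 0" using det_mult[OF P Q] PQ by simp
    have Dij: "D $$ (i,q) = a * (if q+s = i then 1 else 0) + b * (if q+s = i+1 then 1 else 0)"
      if "i < Suc d" "q < Suc d" for i q
    proof -
      have "q + s < d+2" using that unfolding s_def by auto
      hence "D $$ (i,q) = a * (if i \<le> d \<and> q+s = i then 1 else 0) + b * (if i \<le> d \<and> q+s = i+1 then 1 else 0)"
        using W[of i "q+s"] that dr unfolding D_def by simp
      thus ?thesis using that by simp
    qed
    have ut: "upper_triangular D"
      unfolding upper_triangular_def
    proof (intro allI impI)
      fix i q assume i: "i < dim_row D" and qi: "q < i"
      hence i': "i < Suc d" unfolding D_def by simp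
      have "D $$ (i,q) = a * (if q+s = i then 1 else 0) + b * (if q+s = i+1 then 1 else 0)"
        using Dij[OF i'] qi i' by simp
      thus "D $$ (i,q) = 0" using qi unfolding s_def by (auto split: if_splits)
    qed
    have diag: "diag_mat D = replicate (Suc d) c"
    proof (rule nth_equalityI)
      show "length (diag_mat D) = length (replicate (Suc d) c)" unfolding diag_mat_def D_def by simp
      fix i assume "i < length (diag_mat D)"
      hence i: "i < Suc d" unfolding diag_mat_def D_def by simp
      have "diag_mat D ! i = D $$ (i,i)" using i unfolding diag_mat_def by (simp del: upt_Suc add: D_def)
      also have "... = c" using Dij[OF i i] unfolding s_def c_def by auto
      finally show "diag_mat D ! i = replicate (Suc d) c ! i" using i by (simp del: replicate_Suc)
    qed
    have "det D = c ^ Suc d"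
      using det_upper_triangular[OF ut, of "Suc d"] diag unfolding D_def by simp
    with dD0 c0 show False by simp
  qed
  show "\<forall>j<d. x j = 0\<^sub>v (dim1 (Mrep r d :: 'k krep))"
  proof (intro allI impI)
    fix j assume j: "j < d"
    show "x j = 0\<^sub>v (dim1 (Mrep r d :: 'k krep))"
    proof (rule eq_vecI)
      show "dim_vec (x j) = dim_vec (0\<^sub>v (dim1 (Mrep r d :: 'k krep)) :: 'k vec)" using xc j by auto
      fix q assume "q < dim_vec (0\<^sub>v (dim1 (Mrep r d :: 'k krep)) :: 'k vec)"
      hence q: "q < d+2" by simp
      define v where "v = vec d (\<lambda>j. x j $ q)"
      have vc: "v \<in> carrier_vec d" unfolding v_def by simp
      have "\<alpha> *\<^sub>v v = 0\<^sub>v r"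
      proof (rule eq_vecI)
        fix i assume "i < dim_vec (0\<^sub>v r :: 'k vec)"
        hence i: "i < r" by simp
        have "(\<alpha> *\<^sub>v v) $ i = (\<Sum>j<d. \<alpha> $$ (i,j) * v $ j)" by (rule mult_mat_vec_idx[OF \<alpha> vc i])
        also have "... = (\<Sum>j<d. \<alpha> $$ (i,j) * x j $ q)" unfolding v_def by (intro sum.cong refl) simp
        also have "... = 0" using W[OF i q] ab by simp
        finally show "(\<alpha> *\<^sub>v v) $ i = 0\<^sub>v r $ i" using i by simp
      qed (use \<alpha> in simp)
      hence "v = 0\<^sub>v d" using inj vc unfolding inj_lin_def by auto
      hence "v $ j = 0" using j by simp
      thus "x j $ q = 0\<^sub>v (dim1 (Mrep r d :: 'k krep)) $ q" using j q unfolding v_def by simp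
    qed
  qed
qed

definition emb :: "nat \<Rightarrow> nat \<Rightarrow> (nat \<Rightarrow> nat) \<Rightarrow> 'k::field mat" where
  "emb r e \<sigma> = mat r e (\<lambda>(i,j). if i = \<sigma> j then 1 else 0)"

lemma emb_spread:
  fixes g :: "nat \<Rightarrow> 'k::field vec"
  assumes inj: "inj_on \<sigma> {..<e}" and j0: "j0 < e" and i: "\<sigma> j0 < r" and g: "g j0 \<in> carrier_vec n"
  shows "vec n (\<lambda>q. \<Sum>j<e. emb r e \<sigma> $$ (\<sigma> j0, j) * g j $ q) = g j0"
proof (rule eq_vecI)
  fix q assume "q < dim_vec (g j0)"
  hence q: "q < n" using g by auto
  have "(\<Sum>j<e. emb r e \<sigma> $$ (\<sigma> j0, j) * g j $ q) = (\<Sum>j<e. if j = j0 then g j $ q else 0)"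
  proof (intro sum.cong refl)
    fix j assume "j \<in> {..<e}"
    hence j: "j < e" by simp
    have "(\<sigma> j0 = \<sigma> j) = (j = j0)" using inj j j0 by (auto dest: inj_onD)
    thus "emb r e \<sigma> $$ (\<sigma> j0, j) * g j $ q = (if j = j0 then g j $ q else 0)"
      using i j unfolding emb_def by simp
  qed
  also have "... = g j0 $ q" using j0 by (subst sum.delta) auto
  finally show "vec n (\<lambda>q. \<Sum>j<e. emb r e \<sigma> $$ (\<sigma> j0, j) * g j $ q) $ q = g j0 $ q" using q by simp
qed (use g in auto)

lemma emb_spread0:
  fixes g :: "nat \<Rightarrow> 'k::field vec"
  assumes ni: "\<forall>j<e. \<sigma> j \<noteq> i" and i: "i < r"
  shows "vec n (\<lambda>q. \<Sum>j<e. emb r e \<sigma> $$ (i, j) * g j $ q) = 0\<^sub>v n"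
proof (rule eq_vecI)
  fix q assume "q < dim_vec (0\<^sub>v n :: 'k vec)"
  hence q: "q < n" by simp
  have "(\<Sum>j<e. emb r e \<sigma> $$ (i, j) * g j $ q) = 0"
    using ni i by (intro sum.neutral) (auto simp: emb_def)
  thus "vec n (\<lambda>q. \<Sum>j<e. emb r e \<sigma> $$ (i, j) * g j $ q) $ q = 0\<^sub>v n $ q" using q by simp
qed simp

lemma emb_inj:
  assumes inj: "inj_on \<sigma> {..<e}" and rg: "\<forall>j<e. \<sigma> j < r"
  shows "inj_lin r e (emb r e \<sigma> :: 'k::field mat)"
  unfolding inj_lin_def
proof (intro conjI ballI impI)
  show "emb r e \<sigma> \<in> carrier_mat r e" unfolding emb_def by simp
  fix v :: "'k vec" assume v: "v \<in> carrier_vec e" and z: "emb r e \<sigma> *\<^sub>v v = 0\<^sub>v r"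
  show "v = 0\<^sub>v e"
  proof (rule eq_vecI)
    fix j0 assume "j0 < dim_vec (0\<^sub>v e :: 'k vec)"
    hence j0: "j0 < e" by simp
    have "(emb r e \<sigma> *\<^sub>v v) $ (\<sigma> j0) = (\<Sum>j<e. emb r e \<sigma> $$ (\<sigma> j0, j) * v $ j)"
      by (rule mult_mat_vec_idx[OF _ v]) (use rg j0 in \<open>auto simp: emb_def\<close>)
    also have "... = (\<Sum>j<e. if j = j0 then v $ j else 0)"
    proof (intro sum.cong refl)
      fix j assume "j \<in> {..<e}"
      hence j: "j < e" by simp
      have "(\<sigma> j0 = \<sigma> j) = (j = j0)" using inj j j0 by (auto dest: inj_onD)
      thus "emb r e \<sigma> $$ (\<sigma> j0, j) * v $ j = (if j = j0 then v $ j else 0)"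
        using rg j j0 unfolding emb_def by simp
    qed
    also have "... = v $ j0" using j0 by (subst sum.delta) auto
    finally show "v $ j0 = 0\<^sub>v e $ j0" using z rg j0 by simp
  qed (use v in auto)
qed

lemma psi_cong: "(\<And>i. i < n \<Longrightarrow> w i = w' i) \<Longrightarrow> psi n M w = psi n M w'"
  unfolding psi_def by (intro eq_vecI) auto

lemma iso_ker:
  fixes f1 f2 :: "'k::field mat" and u :: "nat \<Rightarrow> 'k vec"
  assumes r: "r \<ge> 1" and dr: "d < r"
    and h: "rep_hom (d+1) (pullback r (emb r (d+1) id) (Mrep r d)) (pullback r \<beta> (Mrep r d)) f1 f2"
    and uz: "psi r (Mrep r d) u = 0\<^sub>v (r*(d+2)-2)"
    and uc: "\<forall>j. u j \<in> carrier_vec (d+2)" and u0: "\<forall>j>d. u j = 0\<^sub>v (d+2)"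
  shows "\<exists>A B. \<forall>i<r. vec (d+2) (\<lambda>q. \<Sum>j<d+1. \<beta> $$ (i,j) * (f1 *\<^sub>v u j) $ q) = A \<cdot>\<^sub>v xv d i + B \<cdot>\<^sub>v yv d i"
proof -
  let ?N = "pullback r (emb r (d+1) id) (Mrep r d)"
  let ?N' = "pullback r \<beta> (Mrep r d)"
  have f1: "f1 \<in> carrier_mat (d+2) (d+2)" and f2: "f2 \<in> carrier_mat (r*(d+2)-2) (r*(d+2)-2)"
    using h unfolding rep_hom_def by auto
  have "psi (d+1) ?N u = psi r (Mrep r d) (\<lambda>i. vec (dim1 (Mrep r d :: 'k krep)) (\<lambda>q. \<Sum>j<d+1. emb r (d+1) id $$ (i,j) * u j $ q))"
    by (rule pullback_psi[OF is_rep_M]) (use uc in simp)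
  also have "... = psi r (Mrep r d) u"
  proof (rule psi_cong)
    fix i assume i: "i < r"
    show "vec (dim1 (Mrep r d :: 'k krep)) (\<lambda>q. \<Sum>j<d+1. emb r (d+1) id $$ (i,j) * u j $ q) = u i"
    proof (cases "i \<le> d")
      case True
      have "vec (d+2) (\<lambda>q. \<Sum>j<d+1. emb r (d+1) id $$ (id i, j) * u j $ q) = u i"
        by (rule emb_spread) (use True i uc in auto)
      thus ?thesis by simp
    next
      case False
      have "vec (d+2) (\<lambda>q. \<Sum>j<d+1. emb r (d+1) id $$ (i, j) * u j $ q) = 0\<^sub>v (d+2)"
        by (rule emb_spread0) (use False i in auto)
      thus ?thesis using u0 False by simp
    qed
  qed
  finally have zN: "psi (d+1) ?N u = 0\<^sub>v (r*(d+2)-2)" using uz by simp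
  have "f2 *\<^sub>v psi (d+1) ?N u = psi (d+1) ?N' (\<lambda>j. f1 *\<^sub>v u j)"
    by (rule hom_psi[OF h]) (use uc in auto)
  moreover have "f2 *\<^sub>v 0\<^sub>v (r*(d+2)-2) = 0\<^sub>v (r*(d+2)-2)" using f2 by auto
  ultimately have "psi (d+1) ?N' (\<lambda>j. f1 *\<^sub>v u j) = 0\<^sub>v (r*(d+2)-2)" using zN by simp
  moreover have "psi (d+1) ?N' (\<lambda>j. f1 *\<^sub>v u j) = psi r (Mrep r d) (\<lambda>i. vec (dim1 (Mrep r d :: 'k krep)) (\<lambda>q. \<Sum>j<d+1. \<beta> $$ (i,j) * (f1 *\<^sub>v u j) $ q))"
    by (rule pullback_psi[OF is_rep_M]) (use uc f1 in auto)
  ultimately have z: "psi r (Mrep r d) (\<lambda>i. vec (d+2) (\<lambda>q. \<Sum>j<d+1. \<beta> $$ (i,j) * (f1 *\<^sub>v u j) $ q)) = 0\<^sub>v (r*(d+2)-2)"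
    by simp
  have wc: "\<forall>i<r. vec (d+2) (\<lambda>q. \<Sum>j<d+1. \<beta> $$ (i,j) * (f1 *\<^sub>v u j) $ q) \<in> carrier_vec (d+2)" by simp
  show ?thesis using ker_imp[OF r wc z] by blast
qed

definition sw :: "nat \<Rightarrow> nat" where "sw j = (if j = 0 then 1 else if j = 1 then 0 else j)"

lemma sw_simps: "sw 0 = 1" "sw 1 = 0" "sw (Suc 0) = 0" "j \<ge> 2 \<Longrightarrow> sw j = j" unfolding sw_def by auto

lemma sw_inj: "inj_on sw A" unfolding inj_on_def sw_def by auto

lemma xv_eq: "t \<le> d \<Longrightarrow> xv d t = unit_vec (d+2) t" unfolding xv_def by simp
lemma yv_eq: "t \<le> d \<Longrightarrow> yv d t = unit_vec (d+2) (t+1)" unfolding yv_def by simp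

lemma nonhom:
  assumes r: "r \<ge> 3" and d: "d \<ge> 1" and dr: "d < r"
  shows "\<not> homogeneous r (d+1) (Mrep r d :: 'k::field krep)"
proof
  assume hom: "homogeneous r (d+1) (Mrep r d :: 'k krep)"
  have r1: "r \<ge> 1" using r by simp
  have a0: "inj_lin r (d+1) (emb r (d+1) id :: 'k mat)"
    by (rule emb_inj) (use dr in auto)
  have xz: "psi r (Mrep r d) (xv d) = (0\<^sub>v (r*(d+2)-2) :: 'k vec)" by (rule ker_x[OF r1])
  have yz: "psi r (Mrep r d) (yv d) = (0\<^sub>v (r*(d+2)-2) :: 'k vec)" by (rule ker_y[OF r1])
  have xc: "\<forall>j. xv d j \<in> carrier_vec (d+2)" and x0: "\<forall>j>d. xv d j = (0\<^sub>v (d+2) :: 'k vec)"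
    and yc: "\<forall>j. yv d j \<in> carrier_vec (d+2)" and y0: "\<forall>j>d. yv d j = (0\<^sub>v (d+2) :: 'k vec)"
    by (auto simp: xv_def yv_def)
  show False
  proof (cases "d+1 < r")
    case True
    have b: "inj_lin r (d+1) (emb r (d+1) Suc :: 'k mat)"
      by (rule emb_inj) (use True in auto)
    obtain f1 f2 where h: "rep_hom (d+1) (pullback r (emb r (d+1) id) (Mrep r d)) (pullback r (emb r (d+1) Suc) (Mrep r d)) f1 f2"
      and inv: "invertible_mat (f1 :: 'k mat)"
      using hom a0 b unfolding homogeneous_def rep_iso_def by blast
    have f1: "f1 \<in> carrier_mat (d+2) (d+2)" using h unfolding rep_hom_def by auto
    obtain A B where AB: "\<forall>i<r. vec (d+2) (\<lambda>q. \<Sum>j<d+1. emb r (d+1) Suc $$ (i,j) * (f1 *\<^sub>v xv d j) $ q) = A \<cdot>\<^sub>v xv d i + B \<cdot>\<^sub>v yv d i"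
      using iso_ker[OF r1 dr h xz xc x0] by blast
    have "vec (d+2) (\<lambda>q. \<Sum>j<d+1. emb r (d+1) Suc $$ (0,j) * (f1 *\<^sub>v xv d j) $ q) = 0\<^sub>v (d+2)"
      by (rule emb_spread0) (use r in auto)
    hence e0: "A \<cdot>\<^sub>v xv d 0 + B \<cdot>\<^sub>v yv d 0 = 0\<^sub>v (d+2)" using AB r by auto
    have "(A \<cdot>\<^sub>v xv d 0 + B \<cdot>\<^sub>v yv d 0) $ 0 = 0" using e0 by simp
    hence A0: "A = 0" by (simp add: xv_idx yv_idx)
    have "(A \<cdot>\<^sub>v xv d 0 + B \<cdot>\<^sub>v yv d 0) $ 1 = 0" using e0 by simp
    hence B0: "B = 0" by (simp add: xv_idx yv_idx)
    have "vec (d+2) (\<lambda>q. \<Sum>j<d+1. emb r (d+1) Suc $$ (Suc 0,j) * (f1 *\<^sub>v xv d j) $ q) = f1 *\<^sub>v xv d 0"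
      using emb_spread[of Suc "d+1" 0 r "\<lambda>j. f1 *\<^sub>v xv d j" "d+2"] f1 r by auto
    hence "f1 *\<^sub>v xv d 0 = A \<cdot>\<^sub>v xv d 1 + B \<cdot>\<^sub>v yv d 1" using AB r by auto
    hence "f1 *\<^sub>v unit_vec (d+2) 0 = 0\<^sub>v (d+2)" using A0 B0 by (auto simp: xv_def intro!: eq_vecI)
    hence "unit_vec (d+2) 0 = (0\<^sub>v (d+2) :: 'k vec)" by (rule invertible_ker[OF inv f1 unit_vec_carrier])
    thus False by (metis unit_vec_nonzero zero_less_Suc add_2_eq_Suc')
  next
    case False
    hence d2: "d \<ge> 2" and rd: "r = d+1" using r dr by auto
    have b: "inj_lin r (d+1) (emb r (d+1) sw :: 'k mat)"
      by (rule emb_inj[OF sw_inj]) (use rd d in \<open>auto simp: sw_def\<close>)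
    obtain f1 f2 where h: "rep_hom (d+1) (pullback r (emb r (d+1) id) (Mrep r d)) (pullback r (emb r (d+1) sw) (Mrep r d)) f1 f2"
      and inv: "invertible_mat (f1 :: 'k mat)"
      using hom a0 b unfolding homogeneous_def rep_iso_def by blast
    have f1: "f1 \<in> carrier_mat (d+2) (d+2)" using h unfolding rep_hom_def by auto
    obtain A B where AB: "\<forall>i<r. vec (d+2) (\<lambda>q. \<Sum>j<d+1. emb r (d+1) sw $$ (i,j) * (f1 *\<^sub>v xv d j) $ q) = A \<cdot>\<^sub>v xv d i + B \<cdot>\<^sub>v yv d i"
      using iso_ker[OF r1 dr h xz xc x0] by blast
    obtain C D where CD: "\<forall>i<r. vec (d+2) (\<lambda>q. \<Sum>j<d+1. emb r (d+1) sw $$ (i,j) * (f1 *\<^sub>v yv d j) $ q) = C \<cdot>\<^sub>v xv d i + D \<cdot>\<^sub>v yv d i"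
      using iso_ker[OF r1 dr h yz yc y0] by blast
    have sp: "\<And>g j0. j0 < d+1 \<Longrightarrow> g j0 \<in> carrier_vec (d+2) \<Longrightarrow>
       vec (d+2) (\<lambda>q. \<Sum>j<d+1. emb r (d+1) sw $$ (sw j0, j) * g j $ q) = g j0"
      by (rule emb_spread[OF sw_inj]) (use rd d in \<open>auto simp: sw_def\<close>)
    have X1: "f1 *\<^sub>v xv d 1 = A \<cdot>\<^sub>v xv d 0 + B \<cdot>\<^sub>v yv d 0"
      using sp[of 1 "\<lambda>j. f1 *\<^sub>v xv d j"] AB[rule_format, of 0] f1 r d by (simp add: sw_simps)
    have X2: "f1 *\<^sub>v xv d 2 = A \<cdot>\<^sub>v xv d 2 + B \<cdot>\<^sub>v yv d 2"
      using sp[of 2 "\<lambda>j. f1 *\<^sub>v xv d j"] AB[rule_format, of 2] f1 rd d2 by (simp add: sw_simps)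
    have Y0: "f1 *\<^sub>v yv d 0 = C \<cdot>\<^sub>v xv d 1 + D \<cdot>\<^sub>v yv d 1"
      using sp[of 0 "\<lambda>j. f1 *\<^sub>v yv d j"] CD[rule_format, of 1] f1 r d by (simp add: sw_simps)
    have Y1: "f1 *\<^sub>v yv d 1 = C \<cdot>\<^sub>v xv d 0 + D \<cdot>\<^sub>v yv d 0"
      using sp[of 1 "\<lambda>j. f1 *\<^sub>v yv d j"] CD[rule_format, of 0] f1 r d by (simp add: sw_simps)
    have e1: "xv d 1 = yv d 0" using d by (simp add: xv_def yv_def)
    have e2: "xv d 2 = yv d 1" using d2 by (simp add: xv_def yv_def)
    have E1: "A \<cdot>\<^sub>v xv d 0 + B \<cdot>\<^sub>v yv d 0 = C \<cdot>\<^sub>v xv d 1 + D \<cdot>\<^sub>v yv d 1" using X1 Y0 e1 by metis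
    have E2: "A \<cdot>\<^sub>v xv d 2 + B \<cdot>\<^sub>v yv d 2 = C \<cdot>\<^sub>v xv d 0 + D \<cdot>\<^sub>v yv d 0" using X2 Y1 e2 by metis
    have "(A \<cdot>\<^sub>v xv d 0 + B \<cdot>\<^sub>v yv d 0) $ 0 = (C \<cdot>\<^sub>v xv d 1 + D \<cdot>\<^sub>v yv d 1) $ 0" using E1 by simp
    hence A0: "A = 0" using d by (simp add: xv_idx yv_idx)
    have "(A \<cdot>\<^sub>v xv d 2 + B \<cdot>\<^sub>v yv d 2) $ 3 = (C \<cdot>\<^sub>v xv d 0 + D \<cdot>\<^sub>v yv d 0) $ 3" using E2 by simp
    hence B0: "B = 0" using d2 by (simp add: xv_idx yv_idx)
    have "f1 *\<^sub>v unit_vec (d+2) 1 = 0\<^sub>v (d+2)" using X1 A0 B0 d by (auto simp: xv_def intro!: eq_vecI)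
    hence "unit_vec (d+2) 1 = (0\<^sub>v (d+2) :: 'k vec)" by (rule invertible_ker[OF inv f1 unit_vec_carrier])
    moreover have "unit_vec (d+2) 1 \<noteq> (0\<^sub>v (d+2) :: 'k vec)" by (rule unit_vec_nonzero) simp
    ultimately show False by simp
  qed
qed

theorem proposition5p2p1:
  fixes r d :: nat
  assumes "alg_closed TYPE('k::field)"
    and "r \<ge> 3" and "1 \<le> d" and "d \<le> r - 1"
  shows "\<exists>M :: 'k krep. is_rep r M \<and> brick r M \<and> rep_proj r d M \<and> \<not> homogeneous r (d + 1) M"
proof -
  have dr: "d < r" using assms by simp
  have r2: "r \<ge> 2" "r \<ge> 1" "r \<ge> 3" using assms by auto
  have "is_rep r (Mrep r d :: 'k krep)" by (rule is_rep_M)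
  moreover have "brick r (Mrep r d :: 'k krep)" by (rule brick_M[OF r2(1) assms(3) dr])
  moreover have "rep_proj r d (Mrep r d :: 'k krep)" by (rule proj_M[OF r2(2) assms(3) dr])
  moreover have "\<not> homogeneous r (d+1) (Mrep r d :: 'k krep)" by (rule nonhom[OF r2(3) assms(3) dr])
  ultimately show ?thesis by blast
qed
end
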